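(* There is $\varepsilon>0$ such that the following holds: there exist constants $L$ with $0<L<1$ and $C>0$ such that for all $x$ with $|x|\le\rho^2+\varepsilon$, all $u$ with $|u|\le1$ and all non-negative integers $k$, $$|w_k(x,u)|\le C|u-1|\cdot|x|\cdot L^k.$$
   Context: Let $y(x)=\sum_{n\ge1}y_nx^n$, $y_n$ the number of unlabelled rooted trees with $n$ vertices; it satisfies $y(x)=x\exp(\sum_{i\ge1}y(x^i)/i)$ and has radius of convergence $\rho\in(0,1)$ with $y(\rho)=1$. Define $y_0(x,u)=uy(x)$ and $y_{k+1}(x,u)=x\exp\left(\sum_{i\ge1}y_k(x^i,u^i)/i\right)$ for $k\ge0$ (generating function of such trees with $u$ marking vertices at distance $k$ from the root), and $w_k(x,u)=y_k(x,u)-y(x)$. *)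

theory Defs
  imports "HOL-Analysis.Analysis" "HOL-Library.Multiset"
begin

text \<open>Unlabelled rooted trees: a root together with a multiset of subtrees.
  Equality of such terms is exactly isomorphism of unlabelled rooted trees.\<close>
datatype rtree = Node "rtree multiset"

primrec nverts :: "rtree \<Rightarrow> nat" where
  "nverts (Node M) = Suc (sum_mset (image_mset nverts M))"

definition ycount :: "nat \<Rightarrow> nat" where
  "ycount n = card {t. nverts t = n}"

definition rho :: real where
  "rho = real_of_ereal (conv_radius (\<lambda>n. real (ycount n)))"

definition ygf :: "complex \<Rightarrow> complex" where
  "ygf x = (\<Sum>n. of_nat (ycount n) * x ^ n)"

primrec yk :: "nat \<Rightarrow> complex \<Rightarrow> complex \<Rightarrow> complex" where
  "yk 0 x u = u * ygf x"
| "yk (Suc k) x u = x * exp (\<Sum>i. yk k (x ^ Suc i) (u ^ Suc i) / of_nat (Suc i))"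

definition wk :: "nat \<Rightarrow> complex \<Rightarrow> complex \<Rightarrow> complex" where
  "wk k x u = yk k x u - ygf x"

end

theory Submission
  imports Defs "HOL-Complex_Analysis.Weierstrass_Factorization"
begin


definition tsz :: "rtree multiset \<Rightarrow> nat" where
  "tsz M = sum_mset (image_mset nverts M)"

definition S :: "nat \<Rightarrow> rtree set" where "S n = {t. nverts t = n}"
definition Ms :: "nat \<Rightarrow> rtree multiset set" where "Ms m = {M. tsz M = m}"
definition acnt :: "nat \<Rightarrow> nat" where "acnt m = card (Ms m)"

lemma nverts_pos: "nverts t \<ge> 1"
  by (cases t) auto

lemma nverts_pos': "0 < nverts t"
  using nverts_pos[of t] by simp

lemma tsz_empty[simp]: "tsz {#} = 0" by (simp add: tsz_def)
lemma tsz_add[simp]: "tsz (add_mset t M) = nverts t + tsz M" by (simp add: tsz_def)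
lemma tsz_union[simp]: "tsz (M + N) = tsz M + tsz N" by (simp add: tsz_def)
lemma tsz_rep[simp]: "tsz (replicate_mset j t) = j * nverts t" by (simp add: tsz_def)

lemma tsz_zero_iff: "tsz M = 0 \<longleftrightarrow> M = {#}"
  by (cases M) (auto simp: tsz_def nverts_pos')

lemma S_Suc: "S (Suc m) = Node ` Ms m"
proof -
  have "t \<in> Node ` Ms m" if "nverts t = Suc m" for t
    using that by (cases t) (auto simp: Ms_def tsz_def)
  thus ?thesis by (auto simp: S_def Ms_def tsz_def)
qed

lemma S_0: "S 0 = {}"
  using nverts_pos' by (force simp: S_def)

lemma Ms_0: "Ms 0 = {{#}}"
  by (auto simp: Ms_def tsz_zero_iff)

lemma Ms_sub: 
  assumes "m > 0"
  shows "Ms m \<subseteq> (\<lambda>(t,N). add_mset t N) ` (\<Union>j\<in>{1..m}. S j \<times> Ms (m - j))"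
proof
  fix M assume "M \<in> Ms m"
  hence M: "tsz M = m" by (simp add: Ms_def)
  with assms have "M \<noteq> {#}" by auto
  then obtain t N where MN: "M = add_mset t N" by (metis multiset_cases)
  have "nverts t \<in> {1..m}" using M MN nverts_pos[of t] by auto
  moreover have "t \<in> S (nverts t)" "N \<in> Ms (m - nverts t)" using M MN by (auto simp: S_def Ms_def)
  ultimately show "M \<in> (\<lambda>(t,N). add_mset t N) ` (\<Union>j\<in>{1..m}. S j \<times> Ms (m - j))"
    using MN by force
qed

lemma finite_Ms: "finite (Ms m)"
proof (induction m rule: less_induct)
  case (less m)
  show ?case
  proof (cases "m = 0")
    case True thus ?thesis by (simp add: Ms_0)
  next
    case False
    have "finite (S j)" if "j \<in> {1..m}" for j
    proof -
      have "j \<ge> 1" using that by simp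
      then obtain i where "j = Suc i" by (cases j) auto
      thus ?thesis using less that by (simp add: S_Suc)
    qed
    moreover have "finite (Ms (m - j))" if "j \<in> {1..m}" for j
      using less that by simp
    ultimately have "finite (\<Union>j\<in>{1..m}. S j \<times> Ms (m - j))" by auto
    thus ?thesis using Ms_sub[of m] False finite_subset by blast
  qed
qed

lemma finite_S: "finite (S n)"
  by (cases n) (auto simp: S_0 S_Suc finite_Ms)

lemma card_S_Suc: "card (S (Suc m)) = acnt m"
  unfolding S_Suc acnt_def by (rule card_image) (auto simp: inj_on_def)

lemma ycount_eq: "ycount n = card (S n)"
  by (simp add: ycount_def S_def)

lemma ycount_0: "ycount 0 = 0" by (simp add: ycount_eq S_0)
lemma ycount_Suc: "ycount (Suc m) = acnt m" by (simp add: ycount_eq card_S_Suc)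

lemma acnt_0: "acnt 0 = 1" by (simp add: acnt_def Ms_0)

lemma acnt_rec:
  assumes "m > 0"
  shows "acnt m \<le> (\<Sum>j\<in>{1..m}. acnt (j - 1) * acnt (m - j))"
proof -
  let ?U = "\<Union>j\<in>{1..m}. S j \<times> Ms (m - j)"
  have fin: "finite ?U" by (auto intro!: finite_SigmaI finite_S finite_Ms)
  have "acnt m \<le> card ((\<lambda>(t,N). add_mset t N) ` ?U)"
    unfolding acnt_def by (rule card_mono[OF finite_imageI[OF fin] Ms_sub[OF assms]])
  also have "\<dots> \<le> card ?U" by (rule card_image_le[OF fin])
  also have "\<dots> \<le> (\<Sum>j\<in>{1..m}. card (S j \<times> Ms (m - j)))"
    by (rule card_UN_le) simp
  also have "\<dots> = (\<Sum>j\<in>{1..m}. acnt (j - 1) * acnt (m - j))"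
  proof (rule sum.cong[OF refl])
    fix j assume "j \<in> {1..m}"
    then obtain i where "j = Suc i" by (cases j) auto
    thus "card (S j \<times> Ms (m - j)) = acnt (j - 1) * acnt (m - j)"
      by (simp add: card_cartesian_product card_S_Suc acnt_def)
  qed
  finally show ?thesis .
qed




lemma conv_sq_bound:
  fixes b :: "nat \<Rightarrow> real"
  assumes "\<And>i. b i \<ge> 0"
  shows "(\<Sum>m\<le>N. \<Sum>i\<le>m. b i * b (m - i)) \<le> (\<Sum>i\<le>N. b i)^2"
proof -
  have "(\<Sum>m\<le>N. \<Sum>i\<le>m. b i * b (m - i)) = (\<Sum>(i,j)\<in>{(i,j). i+j \<le> N}. b i * b j)"
    by (rule sum.triangle_reindex_eq[symmetric])
  also have "\<dots> \<le> (\<Sum>(i,j)\<in>{..N}\<times>{..N}. b i * b j)"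
    by (rule sum_mono2) (auto intro: mult_nonneg_nonneg assms)
  also have "\<dots> = (\<Sum>i\<le>N. b i)^2"
    by (simp add: power2_eq_square sum_product sum.cartesian_product)
  finally show ?thesis .
qed

lemma acnt_psum:
  fixes t p :: real
  assumes t: "t \<ge> 0" and p: "1 + t * p^2 \<le> p"
  shows "(\<Sum>m\<le>N. real (acnt m) * t^m) \<le> p"
proof (induction N)
  case 0
  have "0 \<le> t * p^2" using t by simp
  thus ?case using p by (simp add: acnt_0)
next
  case (Suc N)
  define b where "b i = real (acnt i) * t^i" for i
  have b0: "b i \<ge> 0" for i using t by (simp add: b_def)
  have "(\<Sum>m\<le>Suc N. real (acnt m) * t^m) = 1 + (\<Sum>m\<le>N. real (acnt (Suc m)) * t^(Suc m))"
    by (subst sum.atMost_Suc_shift) (simp add: acnt_0)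
  also have "(\<Sum>m\<le>N. real (acnt (Suc m)) * t^(Suc m)) \<le>
             (\<Sum>m\<le>N. t * (\<Sum>i\<le>m. b i * b (m - i)))"
  proof (rule sum_mono)
    fix m assume "m \<in> {..N}"
    have "real (acnt (Suc m)) \<le> real (\<Sum>j\<in>{1..Suc m}. acnt (j - 1) * acnt (Suc m - j))"
      using acnt_rec[of "Suc m"] by linarith
    also have "(\<Sum>j\<in>{1..Suc m}. acnt (j - 1) * acnt (Suc m - j)) = (\<Sum>i\<le>m. acnt i * acnt (m - i))"
    proof -
      have "{1..Suc m} = Suc ` {..m}" by (rule image_Suc_atMost[symmetric])
      thus ?thesis by (simp add: sum.reindex)
    qed
    finally have "real (acnt (Suc m)) * t^(Suc m) \<le> real (\<Sum>i\<le>m. acnt i * acnt (m - i)) * t^(Suc m)"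
      using t by (intro mult_right_mono) auto
    also have "\<dots> = t * (\<Sum>i\<le>m. b i * b (m - i))"
    proof -
      have "real (acnt i * acnt (m - i)) * t ^ Suc m = t * (b i * b (m - i))" if "i \<le> m" for i
      proof -
        have "t^Suc m = t * (t^i * t^(m-i))" using that by (simp add: power_add[symmetric])
        thus ?thesis by (simp add: b_def)
      qed
      hence "(\<Sum>i\<le>m. real (acnt i * acnt (m - i)) * t ^ Suc m) = (\<Sum>i\<le>m. t * (b i * b (m - i)))"
        by (intro sum.cong) auto
      thus ?thesis by (simp only: of_nat_sum sum_distrib_left sum_distrib_right)
    qed
    finally show "real (acnt (Suc m)) * t^(Suc m) \<le> t * (\<Sum>i\<le>m. b i * b (m - i))" .
  qed
  also have "\<dots> = t * (\<Sum>m\<le>N. \<Sum>i\<le>m. b i * b (m - i))" by (simp add: sum_distrib_left)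
  also have "\<dots> \<le> t * (\<Sum>i\<le>N. b i)^2"
    using conv_sq_bound[OF b0] t by (intro mult_left_mono) auto
  also have "\<dots> \<le> t * p^2"
  proof -
    have "(\<Sum>i\<le>N. b i) \<le> p" using Suc by (simp add: b_def)
    moreover have "0 \<le> (\<Sum>i\<le>N. b i)" using b0 by (simp add: sum_nonneg)
    ultimately show ?thesis using t by (intro mult_left_mono power_mono) auto
  qed
  finally show ?case using p by linarith
qed

lemma acnt_suminf_bound:
  fixes t p :: real
  assumes t: "t \<ge> 0" and p: "1 + t * p^2 \<le> p"
  shows "summable (\<lambda>m. real (acnt m) * t^m)" "(\<Sum>m. real (acnt m) * t^m) \<le> p"
proof -
  have nn: "\<And>m. 0 \<le> real (acnt m) * t^m" using t by simp
  have bd: "\<And>N. (\<Sum>m<N. real (acnt m) * t^m) \<le> p"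
  proof -
    fix N
    show "(\<Sum>m<N. real (acnt m) * t^m) \<le> p"
    proof (cases N)
      case 0 thus ?thesis using acnt_psum[OF t p, of 0] nn[of 0] by simp
    next
      case (Suc n) thus ?thesis using acnt_psum[OF t p, of n] by (simp add: lessThan_Suc_atMost)
    qed
  qed
  show "summable (\<lambda>m. real (acnt m) * t^m)"
    using nn bd by (intro summableI_nonneg_bounded) 
  thus "(\<Sum>m. real (acnt m) * t^m) \<le> p"
    using bd by (intro suminf_le_const) auto
qed

lemma acnt_le: "real (acnt m) \<le> 2 * 4^m"
proof -
  have "(\<Sum>i\<le>m. real (acnt i) * (1/4)^i) \<le> 2" by (rule acnt_psum) auto
  moreover have "real (acnt m) * (1/4)^m \<le> (\<Sum>i\<le>m. real (acnt i) * (1/4)^i)"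
    by (rule member_le_sum) auto
  ultimately have "real (acnt m) * (1/4)^m \<le> 2" by linarith
  thus ?thesis by (simp add: field_simps power_divide)
qed

lemma ycount_le: "real (ycount n) \<le> 2 * 4^n"
proof (cases n)
  case 0 thus ?thesis by (simp add: ycount_0)
next
  case (Suc m) thus ?thesis using acnt_le[of m] by (simp add: ycount_Suc)
qed

lemma ycount_pos: "n \<ge> 1 \<Longrightarrow> ycount n \<ge> 1"
proof (induction n rule: less_induct)
  case (less n)
  then obtain m where n: "n = Suc m" by (cases n) auto
  have "Ms m \<noteq> {}"
  proof (cases m)
    case 0 thus ?thesis by (simp add: Ms_0)
  next
    case (Suc k)
    have "S m \<noteq> {}" using less.IH[of m] Suc n by (auto simp: ycount_eq)
    then obtain t where "t \<in> S m" by auto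
    hence "{#t#} \<in> Ms m" by (simp add: S_def Ms_def tsz_def)
    thus ?thesis by auto
  qed
  hence "acnt m \<noteq> 0" using finite_Ms[of m] by (simp add: acnt_def)
  thus ?case using n by (simp add: ycount_Suc)
qed




lemma tsz_count: "tsz N = (\<Sum>t\<in>set_mset N. count N t * nverts t)"
proof (induction N)
  case empty thus ?case by simp
next
  case (add x N)
  show ?case
  proof (cases "x \<in># N")
    case True
    have "(\<Sum>t\<in>set_mset N. count (add_mset x N) t * nverts t) =
          (\<Sum>t\<in>set_mset N. count N t * nverts t + (if t = x then nverts t else 0))"
      by (intro sum.cong) auto
    also have "\<dots> = (\<Sum>t\<in>set_mset N. count N t * nverts t) + nverts x"
      using True by (simp add: sum.distrib)
    finally show ?thesis using True add by (simp add: insert_absorb)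
  next
    case False
    have "(\<Sum>t\<in>set_mset N. count (add_mset x N) t * nverts t) = (\<Sum>t\<in>set_mset N. count N t * nverts t)"
      using False by (intro sum.cong) auto
    thus ?thesis using False add by (simp add: not_in_iff)
  qed
qed

definition G :: "nat \<Rightarrow> (nat \<times> nat) set" where
  "G k = {(i,d). d * Suc i = k \<and> 0 < d}"

lemma G_sub: "G k \<subseteq> {..k} \<times> {..k}"
proof
  fix x assume "x \<in> G k"
  then obtain i d where x: "x = (i,d)" "d * Suc i = k" "0 < d" by (auto simp: G_def)
  have "d \<le> d * Suc i" by simp
  hence "d \<le> k" using x by simp
  moreover have "Suc i \<le> d * Suc i" using x(3) mult_le_mono1[of 1 d "Suc i"] by simp
  hence "i \<le> k" using x by simp
  ultimately show "x \<in> {..k} \<times> {..k}" using x by auto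
qed

lemma finite_G: "finite (G k)"
  using G_sub by (rule finite_subset) auto

definition ccoef :: "nat \<Rightarrow> nat" where
  "ccoef k = (\<Sum>(i,d)\<in>G k. d * ycount d)"

lemma euler_rec:
  "M * acnt M = (\<Sum>k\<in>{1..M}. ccoef k * acnt (M - k))"
proof -
  define P where "P = Sigma (Ms M) (\<lambda>N. Sigma (set_mset N) (\<lambda>t. {1..count N t}))"
  define ID where "ID = {(i,d). 0 < d \<and> d * Suc i \<le> M}"
  define Q where "Q = Sigma ID (\<lambda>(i,d). S d \<times> Ms (M - d * Suc i))"
  have finID: "finite ID"
  proof (rule finite_subset)
    show "ID \<subseteq> (\<Union>k\<in>{..M}. G k)" by (auto simp: ID_def G_def)
  qed (auto intro: finite_G)
  have finQ: "finite Q" unfolding Q_def using finID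
    by (intro finite_SigmaI) (auto intro!: finite_SigmaI finite_S finite_Ms)
  have finP: "finite P" unfolding P_def by (intro finite_SigmaI finite_Ms) auto
  have A: "(\<Sum>x\<in>P. nverts (fst (snd x))) = M * acnt M"
  proof -
    have "(\<Sum>x\<in>P. nverts (fst (snd x))) = (\<Sum>N\<in>Ms M. \<Sum>y\<in>Sigma (set_mset N) (\<lambda>t. {1..count N t}). nverts (fst y))"
      unfolding P_def by (subst sum.Sigma) (auto intro: finite_Ms simp: case_prod_beta)
    also have "\<dots> = (\<Sum>N\<in>Ms M. tsz N)"
    proof (rule sum.cong[OF refl])
      fix N
      have "(\<Sum>y\<in>Sigma (set_mset N) (\<lambda>t. {1..count N t}). nverts (fst y)) =
            (\<Sum>t\<in>set_mset N. \<Sum>j\<in>{1..count N t}. nverts t)"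
        by (subst sum.Sigma) (auto simp: case_prod_beta)
      also have "\<dots> = tsz N" by (simp add: tsz_count)
      finally show "(\<Sum>y\<in>Sigma (set_mset N) (\<lambda>t. {1..count N t}). nverts (fst y)) = tsz N" .
    qed
    also have "\<dots> = (\<Sum>N\<in>Ms M. M)" by (intro sum.cong) (auto simp: Ms_def)
    also have "\<dots> = M * acnt M" by (simp add: acnt_def)
    finally show ?thesis .
  qed
  define fQP where "fQP = (\<lambda>((i::nat,d::nat),(t::rtree,N')). (N' + replicate_mset (Suc i) t, (t, Suc i)))"
  define fPQ where "fPQ = (\<lambda>(N,(t,j)). ((j - 1, nverts t), (t, N - replicate_mset j t)))"
  have B: "(\<Sum>x\<in>P. nverts (fst (snd x))) = (\<Sum>q\<in>Q. snd (fst q))"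
  proof (rule sum.reindex_bij_witness[where i = fQP and j = fPQ])
    fix q assume q: "q \<in> Q"
    then obtain i d t N' where qq: "q = ((i,d),(t,N'))" "0 < d" "d * Suc i \<le> M" "nverts t = d" "tsz N' = M - d * Suc i"
      by (auto simp: Q_def ID_def S_def Ms_def)
    show "fPQ (fQP q) = q"
      using qq by (simp add: fPQ_def fQP_def)
    have "tsz (N' + replicate_mset (Suc i) t) = M" using qq by (simp add: mult.commute)
    thus "fQP q \<in> P"
      using qq by (auto simp: P_def Ms_def fQP_def)
  next
    fix p assume p: "p \<in> P"
    then obtain N t j where pp: "p = (N,(t,j))" "tsz N = M" "t \<in># N" "1 \<le> j" "j \<le> count N t"
    proof -
      from p obtain N y where 1: "p = (N,y)" "N \<in> Ms M" "y \<in> Sigma (set_mset N) (\<lambda>t. {1..count N t})"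
        unfolding P_def by blast
      from 1(3) obtain t j where 2: "y = (t,j)" "t \<in># N" "j \<in> {1..count N t}" by blast
      show ?thesis using 1 2 that unfolding Ms_def by auto
    qed
    have sub: "replicate_mset j t \<subseteq># N" using pp(5) by (simp only: count_le_replicate_mset_subset_eq)
    hence NN: "N = (N - replicate_mset j t) + replicate_mset j t" by (rule subset_mset.diff_add[symmetric])
    have "tsz N = tsz (N - replicate_mset j t) + j * nverts t"
      by (subst NN) (simp only: tsz_union tsz_rep)
    hence tszN: "tsz (N - replicate_mset j t) + j * nverts t = M"
      using pp(2) by simp
    have sj: "Suc (j - 1) = j" using pp(4) by simp
    have "fQP (fPQ p) = (N - replicate_mset j t + replicate_mset j t, (t, j))"
      using pp(1) sj by (simp add: fPQ_def fQP_def del: replicate_mset_Suc)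
    thus "fQP (fPQ p) = p" using NN pp(1) by simp
    have "0 < nverts t" by (rule nverts_pos')
    moreover have "nverts t * Suc (j - 1) \<le> M" using tszN sj by (simp add: mult.commute)
    moreover have "tsz (N - replicate_mset j t) = M - nverts t * Suc (j - 1)"
      using tszN sj by (simp add: mult.commute)
    ultimately show "fPQ p \<in> Q"
      using pp(1) by (simp add: Q_def ID_def S_def Ms_def fPQ_def)
    show "snd (fst (fPQ p)) = nverts (fst (snd p))"
      using pp(1) by (simp add: fPQ_def)
  qed
  have C: "(\<Sum>q\<in>Q. snd (fst q)) = (\<Sum>(i,d)\<in>ID. d * ycount d * acnt (M - d * Suc i))"
  proof -
    have fin2: "\<forall>x\<in>ID. finite ((\<lambda>(i,d). S d \<times> Ms (M - d * Suc i)) x)"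
      by (auto intro!: finite_SigmaI finite_S finite_Ms)
    have "(\<Sum>q\<in>Q. snd (fst q)) = (\<Sum>x\<in>ID. \<Sum>y\<in>(\<lambda>(i,d). S d \<times> Ms (M - d * Suc i)) x. snd x)"
      unfolding Q_def by (subst sum.Sigma[OF finID fin2]) (simp add: split_def)
    also have "\<dots> = (\<Sum>(i,d)\<in>ID. d * ycount d * acnt (M - d * Suc i))"
      by (intro sum.cong) (auto simp: card_cartesian_product ycount_eq acnt_def)
    finally show ?thesis .
  qed
  have D: "(\<Sum>(i,d)\<in>ID. d * ycount d * acnt (M - d * Suc i)) = (\<Sum>k\<in>{1..M}. ccoef k * acnt (M - k))"
  proof -
    have "(\<Sum>(i,d)\<in>ID. d * ycount d * acnt (M - d * Suc i)) =
          (\<Sum>k\<in>{1..M}. \<Sum>x\<in>{x\<in>ID. (\<lambda>(i,d). d * Suc i) x = k}. (\<lambda>(i,d). d * ycount d * acnt (M - d * Suc i)) x)"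
    proof (rule sum.group[symmetric, OF finID])
      show "(\<lambda>(i,d). d * Suc i) ` ID \<subseteq> {1..M}"
        by (auto simp: ID_def Suc_le_eq)
    qed simp
    also have "\<dots> = (\<Sum>k\<in>{1..M}. ccoef k * acnt (M - k))"
    proof (rule sum.cong[OF refl])
      fix k assume k: "k \<in> {1..M}"
      have E: "{x\<in>ID. (\<lambda>(i,d). d * Suc i) x = k} = G k" using k by (auto simp: ID_def G_def)
      have "(\<Sum>x\<in>G k. (\<lambda>(i,d). d * ycount d * acnt (M - d * Suc i)) x) = (\<Sum>x\<in>G k. (\<lambda>(i,d). d * ycount d) x * acnt (M - k))"
        by (intro sum.cong) (auto simp: G_def)
      also have "\<dots> = ccoef k * acnt (M - k)" by (simp add: ccoef_def sum_distrib_right)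
      finally show "(\<Sum>x\<in>{x\<in>ID. (\<lambda>(i,d). d * Suc i) x = k}. (\<lambda>(i,d). d * ycount d * acnt (M - d * Suc i)) x) = ccoef k * acnt (M - k)"
        using E by simp
    qed
    finally show ?thesis .
  qed
  show ?thesis using A B C D by simp
qed




lemma ycount_summable_quarter:
  fixes r :: real assumes "0 \<le> r" "r < 1/4"
  shows "summable (\<lambda>n. real (ycount n) * r^n)"
proof (rule summable_comparison_test)
  show "summable (\<lambda>n. 2 * (4*r)^n)" using assms by (intro summable_mult summable_geometric) auto
  show "\<exists>N. \<forall>n\<ge>N. norm (real (ycount n) * r^n) \<le> 2 * (4*r)^n"
  proof (intro exI allI impI)
    fix n :: nat
    have "real (ycount n) * r^n \<le> 2 * 4^n * r^n" using ycount_le[of n] assms by (intro mult_right_mono) auto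
    thus "norm (real (ycount n) * r^n) \<le> 2 * (4*r)^n" using assms by (simp add: power_mult_distrib)
  qed
qed

lemma conv_radius_y_ge: "conv_radius (\<lambda>n. real (ycount n)) \<ge> ereal (1/4)"
proof (rule conv_radius_geI_ex')
  fix r :: real assume "0 < r" "ereal r < ereal (1/4)"
  thus "summable (\<lambda>n. real (ycount n) * of_real r^n)" using ycount_summable_quarter[of r] by simp
qed

lemma conv_radius_y_le: "conv_radius (\<lambda>n. real (ycount n)) \<le> 1"
proof -
  have "\<not> summable (\<lambda>n. norm (real (ycount n) * (1::real) ^ n))"
  proof
    assume "summable (\<lambda>n. norm (real (ycount n) * (1::real) ^ n))"
    hence "(\<lambda>n. norm (real (ycount n) * (1::real) ^ n)) \<longlonglongrightarrow> 0" by (rule summable_LIMSEQ_zero)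
    hence "eventually (\<lambda>n. norm (real (ycount n) * (1::real) ^ n) < 1/2) sequentially"
      by (rule order_tendstoD) simp
    then obtain N where N: "\<And>n. n \<ge> N \<Longrightarrow> norm (real (ycount n) * (1::real) ^ n) < 1/2"
      by (auto simp: eventually_sequentially)
    have "ycount (Suc N) \<ge> 1" by (rule ycount_pos) simp
    thus False using N[of "Suc N"] by simp
  qed
  hence "conv_radius (\<lambda>n. real (ycount n)) \<le> ereal (norm (1::real))" by (rule conv_radius_leI)
  thus ?thesis by (simp add: one_ereal_def)
qed

lemma rho_props: "conv_radius (\<lambda>n. real (ycount n)) = ereal rho" "1/4 \<le> rho" "rho \<le> 1"
proof -
  have a: "ereal (1/4) \<le> conv_radius (\<lambda>n. real (ycount n))" by (rule conv_radius_y_ge)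
  have b: "conv_radius (\<lambda>n. real (ycount n)) \<le> 1" by (rule conv_radius_y_le)
  obtain c where c: "conv_radius (\<lambda>n. real (ycount n)) = ereal c"
    using a b by (cases "conv_radius (\<lambda>n. real (ycount n))") auto
  show "conv_radius (\<lambda>n. real (ycount n)) = ereal rho" using c by (simp add: rho_def)
  show "1/4 \<le> rho" using a c by (simp add: rho_def)
  show "rho \<le> 1" using b c by (simp add: rho_def)
qed

lemma conv_radius_yc: "conv_radius (\<lambda>n. of_nat (ycount n) :: complex) = ereal rho"
proof -
  have "conv_radius (\<lambda>n. of_nat (ycount n) :: complex) = conv_radius (\<lambda>n. real (ycount n))"
    by (rule conv_radius_cong) simp
  thus ?thesis using rho_props(1) by simp
qed

lemma y_abs_summable:
  fixes x :: complex assumes "cmod x < rho"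
  shows "summable (\<lambda>n. norm (of_nat (ycount n) * x^n))"
  using assms by (intro abs_summable_in_conv_radius) (simp add: conv_radius_yc)

lemma ygf_sums:
  fixes x :: complex assumes "cmod x < rho"
  shows "(\<lambda>n. of_nat (ycount n) * x^n) sums ygf x"
  unfolding ygf_def using summable_norm_cancel[OF y_abs_summable[OF assms]] by (rule summable_sums)

definition Yr :: "real \<Rightarrow> real" where "Yr r = (\<Sum>n. real (ycount n) * r^n)"

lemma Yr_sums: "0 \<le> r \<Longrightarrow> r < rho \<Longrightarrow> (\<lambda>n. real (ycount n) * r^n) sums Yr r"
  using y_abs_summable[of "of_real r"] unfolding Yr_def
  by (intro summable_sums) (simp add: norm_mult norm_power)

lemma norm_ygf_le: "cmod x < rho \<Longrightarrow> cmod (ygf x) \<le> Yr (cmod x)"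
proof -
  assume x: "cmod x < rho"
  have "cmod (ygf x) = norm (\<Sum>n. of_nat (ycount n) * x^n)" by (simp add: ygf_def)
  also have "\<dots> \<le> (\<Sum>n. norm (of_nat (ycount n) * x^n))"
    by (rule summable_norm[OF y_abs_summable[OF x]])
  also have "\<dots> = Yr (cmod x)" by (simp add: Yr_def norm_mult norm_power)
  finally show ?thesis .
qed

definition Tt :: "complex \<Rightarrow> nat \<times> nat \<Rightarrow> complex" where
  "Tt x p = of_nat (ycount (snd p)) * x ^ (snd p * Suc (fst p)) / of_nat (Suc (fst p))"

lemma Tt_bound:
  assumes "cmod x \<le> 1"
  shows "norm (Tt x (i,d)) \<le> cmod x ^ i * (real (ycount d) * cmod x ^ d)"
proof (cases "d = 0")
  case True thus ?thesis by (simp add: Tt_def ycount_0)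
next
  case False
  let ?r = "cmod x"
  have "d + i \<le> d * Suc i" using False by (simp add: algebra_simps)
  hence "?r ^ (d * Suc i) \<le> ?r ^ (d + i)" using assms by (intro power_decreasing) auto
  hence "real (ycount d) * ?r ^ (d * Suc i) / real (Suc i) \<le> real (ycount d) * ?r ^ (d + i) / 1"
    by (intro frac_le mult_left_mono) auto
  moreover have "norm (Tt x (i,d)) = real (ycount d) * ?r ^ (d * Suc i) / real (Suc i)"
    unfolding Tt_def norm_divide norm_mult norm_power norm_of_nat by simp
  ultimately show ?thesis by (simp add: power_add algebra_simps)
qed

lemma Tt_abs_summable:
  assumes "cmod x < rho"
  shows "(\<lambda>p. norm (Tt x p)) summable_on UNIV"
proof -
  let ?r = "cmod x"
  have r1: "?r < 1" using assms rho_props(3) by simp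
  define g where "g = (\<lambda>p::nat\<times>nat. ?r ^ fst p * (real (ycount (snd p)) * ?r ^ snd p))"
  have "g summable_on Sigma UNIV (\<lambda>_. UNIV)"
  proof (rule summable_on_SigmaI)
    fix i :: nat
    show "((\<lambda>d. g (i, d)) has_sum (?r^i * Yr ?r)) UNIV"
    proof -
      have "(\<lambda>n. real (ycount n) * ?r^n) sums Yr ?r" using assms by (intro Yr_sums) auto
      hence "(\<lambda>d. ?r^i * (real (ycount d) * ?r^d)) sums (?r^i * Yr ?r)" by (rule sums_mult)
      thus ?thesis by (intro sums_nonneg_imp_has_sum) (auto simp: g_def)
    qed
  next
    show "(\<lambda>i. ?r^i * Yr ?r) summable_on UNIV"
    proof -
      have "summable (\<lambda>n. real (ycount n) * ?r^n)" using Yr_sums[of ?r] assms by (auto simp: sums_iff)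
      hence "Yr ?r \<ge> 0" unfolding Yr_def by (intro suminf_nonneg) auto
      thus ?thesis using r1 by (subst summable_on_UNIV_nonneg_real_iff)
        (auto intro!: summable_mult2 summable_geometric)
    qed
  next
    fix i d show "0 \<le> g (i,d)" by (simp add: g_def)
  qed
  hence gs: "g summable_on UNIV" by simp
  show ?thesis
  proof (rule Infinite_Sum.abs_summable_on_comparison_test'[OF gs])
    fix p :: "nat \<times> nat"
    obtain i d where "p = (i,d)" by (cases p)
    thus "norm (Tt x p) \<le> g p" using Tt_bound[of x i d] r1 by (simp add: g_def)
  qed
qed




lemma Tt_summable: "cmod x < rho \<Longrightarrow> Tt x summable_on UNIV"
  by (rule abs_summable_summable) (use Tt_abs_summable in auto)

lemma Tt_row_has_sum:
  assumes x: "cmod x < rho"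
  shows "((\<lambda>d. Tt x (i,d)) has_sum (ygf (x^Suc i) / of_nat (Suc i))) UNIV"
proof (rule norm_summable_imp_has_sum)
  let ?r = "cmod x"
  have r1: "?r \<le> 1" using x rho_props(3) by simp
  have "summable (\<lambda>d. ?r^i * (real (ycount d) * ?r^d))"
    using Yr_sums[of ?r] x by (intro summable_mult) (auto simp: sums_iff)
  thus "summable (\<lambda>d. norm (Tt x (i,d)))"
    by (rule summable_comparison_test') (use Tt_bound[OF r1] in auto)
  have xi: "cmod (x^Suc i) < rho"
  proof -
    have "cmod x ^ i \<le> 1" using r1 by (simp add: power_le_one)
    hence "cmod x * cmod x ^ i \<le> cmod x * 1" by (intro mult_left_mono) auto
    hence "cmod (x^Suc i) \<le> cmod x" by (simp add: norm_power norm_mult)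
    thus ?thesis using x by simp
  qed
  have "(\<lambda>d. of_nat (ycount d) * (x^Suc i)^d / of_nat (Suc i)) sums (ygf (x^Suc i) / of_nat (Suc i))"
    by (intro sums_divide ygf_sums xi)
  moreover have "(\<lambda>d. of_nat (ycount d) * (x^Suc i)^d / of_nat (Suc i)) = (\<lambda>d. Tt x (i,d))"
  proof -
    have e: "(x^Suc i)^d = x^(d * Suc i)" for d by (metis power_mult mult.commute)
    show ?thesis by (simp only: Tt_def fst_conv snd_conv e)
  qed
  ultimately show "(\<lambda>d. Tt x (i,d)) sums (ygf (x^Suc i) / of_nat (Suc i))" by simp
qed

lemma ysum_sums:
  assumes x: "cmod x < rho"
  shows "(\<lambda>i. ygf (x^Suc i) / of_nat (Suc i)) sums (infsum (Tt x) UNIV)"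
proof -
  have "(Tt x has_sum infsum (Tt x) UNIV) (Sigma UNIV (\<lambda>_. UNIV))"
    using Tt_summable[OF x] by simp
  hence "((\<lambda>i. ygf (x^Suc i) / of_nat (Suc i)) has_sum infsum (Tt x) UNIV) UNIV"
    by (rule has_sum_SigmaD) (rule Tt_row_has_sum[OF x])
  thus ?thesis by (rule has_sum_imp_sums)
qed

definition Hc :: "nat \<Rightarrow> complex" where
  "Hc k = (\<Sum>p\<in>G k. of_nat (ycount (snd p)) / of_nat (Suc (fst p)))"

definition Hf :: "complex fps" where "Hf = Abs_fps Hc"

lemma Hc_sums:
  assumes x: "cmod x < rho"
  shows "(\<lambda>k. Hc k * x^k) sums (infsum (Tt x) UNIV)"
proof -
  define Gall where "Gall k = {p::nat\<times>nat. snd p * Suc (fst p) = k}" for k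
  have "(Tt x has_sum infsum (Tt x) UNIV) UNIV"
    using Tt_summable[OF x] by simp
  moreover have "(Tt x has_sum infsum (Tt x) UNIV) UNIV \<longleftrightarrow>
        ((\<lambda>q. Tt x (snd q)) has_sum infsum (Tt x) UNIV) (Sigma UNIV Gall)"
    by (rule has_sum_reindex_bij_witness[where j = "\<lambda>p. (snd p * Suc (fst p), p)" and i = snd])
       (auto simp: Gall_def)
  ultimately have hs: "((\<lambda>q. Tt x (snd q)) has_sum infsum (Tt x) UNIV) (Sigma UNIV Gall)" by simp
  have "((\<lambda>k. Hc k * x^k) has_sum infsum (Tt x) UNIV) UNIV"
  proof (rule has_sum_SigmaD[OF hs])
    fix k :: nat
    have "(Tt x has_sum (Hc k * x^k)) (G k)"
    proof (rule has_sum_finiteI[OF finite_G])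
      have "sum (Tt x) (G k) = (\<Sum>p\<in>G k. of_nat (ycount (snd p)) / of_nat (Suc (fst p)) * x^k)"
        by (intro sum.cong) (auto simp: G_def Tt_def)
      thus "Hc k * x^k = sum (Tt x) (G k)" by (simp add: Hc_def sum_distrib_right)
    qed
    moreover have "(Tt x has_sum (Hc k * x^k)) (G k) \<longleftrightarrow> (Tt x has_sum (Hc k * x^k)) (Gall k)"
      by (rule has_sum_cong_neutral) (auto simp: G_def Gall_def Tt_def ycount_0)
    ultimately show "((\<lambda>y. Tt x (snd (k, y))) has_sum (Hc k * x^k)) (Gall k)" by simp
  qed
  thus ?thesis by (rule has_sum_imp_sums)
qed

lemma Hf_radius: "fps_conv_radius Hf \<ge> ereal rho"
  unfolding fps_conv_radius_def Hf_def
proof (rule conv_radius_geI_ex)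
  fix r :: real assume r: "0 < r" "ereal r < ereal rho"
  show "\<exists>z::complex. norm z = r \<and> summable (\<lambda>n. fps_nth (Abs_fps Hc) n * z^n)"
    using Hc_sums[of "of_real r"] r by (intro exI[of _ "of_real r"]) (auto simp: sums_iff)
qed

lemma eval_Hf:
  assumes x: "cmod x < rho"
  shows "eval_fps Hf x = (\<Sum>i. ygf (x^Suc i) / of_nat (Suc i))"
    "summable (\<lambda>i. ygf (x^Suc i) / of_nat (Suc i))"
  using Hc_sums[OF x] ysum_sums[OF x] by (auto simp: eval_fps_def Hf_def sums_iff)




definition Af :: "complex fps" where "Af = Abs_fps (\<lambda>m. of_nat (acnt m))"

lemma Af_radius: "fps_conv_radius Af = ereal rho"
proof -
  have "fps_conv_radius Af = conv_radius (\<lambda>n. of_nat (ycount (n + 1)) :: complex)"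
    by (simp add: fps_conv_radius_def Af_def ycount_Suc)
  also have "\<dots> = conv_radius (\<lambda>n. of_nat (ycount n) :: complex)" by (rule conv_radius_shift)
  finally show ?thesis by (simp add: conv_radius_yc)
qed

lemma Hc_ccoef: "of_nat k * Hc k = of_nat (ccoef k)"
proof -
  have "of_nat k * Hc k = (\<Sum>p\<in>G k. of_nat k * (of_nat (ycount (snd p)) / of_nat (Suc (fst p))))"
    by (simp add: Hc_def sum_distrib_left)
  also have "\<dots> = (\<Sum>p\<in>G k. of_nat (snd p * ycount (snd p)))"
  proof (intro sum.cong refl)
    fix p assume "p \<in> G k"
    then obtain i d where p: "p = (i,d)" "k = d * Suc i" by (auto simp: G_def)
    have "(of_nat (Suc i) :: complex) \<noteq> 0" by (simp del: of_nat_Suc)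
    thus "of_nat k * (of_nat (ycount (snd p)) / of_nat (Suc (fst p))) = (of_nat (snd p * ycount (snd p)) :: complex)"
      using p by (simp del: of_nat_Suc add: field_simps) (simp add: algebra_simps)
  qed
  also have "\<dots> = of_nat (ccoef k)" by (simp add: ccoef_def case_prod_beta)
  finally show ?thesis .
qed

lemma fps_ode: "fps_deriv Af = fps_deriv Hf * Af"
proof (rule fps_ext)
  fix m
  have "fps_nth (fps_deriv Af) m = of_nat (Suc m * acnt (Suc m))" by (simp add: Af_def algebra_simps)
  also have "Suc m * acnt (Suc m) = (\<Sum>k\<in>{1..Suc m}. ccoef k * acnt (Suc m - k))" by (rule euler_rec)
  also have "\<dots> = (\<Sum>i\<in>{0..m}. ccoef (Suc i) * acnt (m - i))"
  proof -
    have e: "{1..Suc m} = Suc ` {0..m}" by (simp add: image_Suc_atLeastAtMost)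
    show ?thesis unfolding e by (subst sum.reindex) (auto simp: o_def)
  qed
  also have "(of_nat \<dots> :: complex) = (\<Sum>i=0..m. fps_nth (fps_deriv Hf) i * fps_nth Af (m - i))"
    by (simp add: Hf_def Af_def Hc_ccoef[symmetric] del: of_nat_Suc)
  also have "\<dots> = fps_nth (fps_deriv Hf * Af) m" by (simp add: fps_mult_nth)
  finally show "fps_nth (fps_deriv Af) m = fps_nth (fps_deriv Hf * Af) m" .
qed

lemma Af_exp:
  assumes z: "cmod z < rho"
  shows "eval_fps Af z = exp (eval_fps Hf z)"
proof -
  define F where "F z = eval_fps Af z * exp (- eval_fps Hf z)" for z
  have rA: "ereal (norm w) < fps_conv_radius Af" if "w \<in> ball 0 rho" for w
    using that Af_radius by simp
  have rH: "ereal (norm w) < fps_conv_radius Hf" if "w \<in> ball 0 rho" for w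
  proof -
    have "ereal (norm w) < ereal rho" using that by simp
    thus ?thesis using Hf_radius by (rule less_le_trans)
  qed
  have rdH: "ereal (norm w) < fps_conv_radius (fps_deriv Hf)" if "w \<in> ball 0 rho" for w
    using rH[OF that] fps_conv_radius_deriv[of Hf] by (rule less_le_trans)
  have "\<exists>c. \<forall>w\<in>ball 0 rho. F w = c"
  proof (rule has_field_derivative_zero_constant)
    fix w :: complex assume w: "w \<in> ball 0 rho"
    have dA: "(eval_fps Af has_field_derivative eval_fps (fps_deriv Af) w) (at w within ball 0 rho)"
      using rA[OF w] by (intro has_field_derivative_eval_fps) auto
    have dH: "(eval_fps Hf has_field_derivative eval_fps (fps_deriv Hf) w) (at w within ball 0 rho)"
      using rH[OF w] by (intro has_field_derivative_eval_fps) auto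
    have e: "eval_fps (fps_deriv Af) w = eval_fps (fps_deriv Hf) w * eval_fps Af w"
      using rA[OF w] rdH[OF w] by (simp add: fps_ode eval_fps_mult)
    have "(F has_field_derivative (eval_fps (fps_deriv Af) w * exp (- eval_fps Hf w) +
            eval_fps Af w * (exp (- eval_fps Hf w) * (- eval_fps (fps_deriv Hf) w)))) (at w within ball 0 rho)"
      using dA dH rA[OF w] rH[OF w] unfolding F_def by (auto intro!: derivative_eq_intros simp: algebra_simps)
    thus "(F has_field_derivative 0) (at w within ball 0 rho)"
      using e by (simp add: algebra_simps)
  qed auto
  then obtain c where c: "\<And>w. w \<in> ball 0 rho \<Longrightarrow> F w = c" by blast
  have rpos: "0 < rho" using rho_props(2) by simp
  have "G 0 = {}" by (auto simp: G_def)
  hence "Hc 0 = 0" by (simp add: Hc_def)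
  hence "F 0 = 1" by (simp add: F_def eval_fps_at_0 Af_def Hf_def acnt_0)
  hence "c = 1" using c[of 0] rpos by simp
  hence "F z = 1" using c[of z] z by simp
  thus ?thesis by (simp add: F_def exp_minus field_simps)
qed

lemma ygf_eq_Af:
  assumes z: "cmod z < rho"
  shows "ygf z = z * eval_fps Af z"
proof -
  have "(\<lambda>n. fps_nth Af n * z^n) sums eval_fps Af z"
    using z Af_radius by (intro sums_eval_fps) simp
  hence "(\<lambda>n. z * (fps_nth Af n * z^n)) sums (z * eval_fps Af z)" by (rule sums_mult)
  moreover have "(\<lambda>n. z * (fps_nth Af n * z^n)) = (\<lambda>n. of_nat (ycount (Suc n)) * z^(Suc n))"
    by (auto simp: Af_def ycount_Suc fun_eq_iff)
  ultimately have "(\<lambda>n. of_nat (ycount n) * z^n) sums (z * eval_fps Af z + of_nat (ycount 0) * z^0)"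
    by (intro sums_Suc) simp
  hence "(\<lambda>n. of_nat (ycount n) * z^n) sums (z * eval_fps Af z)" by (simp add: ycount_0)
  thus ?thesis unfolding ygf_def by (rule sums_unique[symmetric])
qed

lemma functional_eq:
  assumes z: "cmod z < rho"
  shows "ygf z = z * exp (\<Sum>i. ygf (z^Suc i) / of_nat (Suc i))"
  using ygf_eq_Af[OF z] Af_exp[OF z] eval_Hf[OF z] by simp




lemma e_lower: "exp (1::real) \<ge> 26/10"
proof -
  have "(1 + (1::real) / of_nat 20) ^ 20 \<le> exp 1"
    by (rule exp_ge_one_plus_x_over_n_power_n) auto
  moreover have "(26/10::real) \<le> (1 + (1::real) / of_nat 20) ^ 20" by (simp add: power_divide)
  ultimately show ?thesis by linarith
qed

lemma exp_ge_e_times: "exp (v::real) \<ge> exp 1 * v"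
proof -
  have "exp (v - 1) \<ge> 1 + (v - 1)" by (rule exp_ge_add_one_self)
  hence "exp 1 * exp (v - 1) \<ge> exp 1 * v" by (intro mult_left_mono) auto
  thus ?thesis by (simp add: exp_diff)
qed

lemma ygf_real:
  assumes "0 \<le> t" "t < rho"
  shows "ygf (of_real t) = of_real (Yr t)"
proof -
  have "(\<lambda>n. of_real (real (ycount n) * t^n) :: complex) sums of_real (Yr t)"
    using Yr_sums[OF assms] by (rule sums_of_real)
  hence "(\<lambda>n. of_nat (ycount n) * (of_real t)^n :: complex) sums of_real (Yr t)" by simp
  moreover have "(\<lambda>n. of_nat (ycount n) * (of_real t)^n :: complex) sums ygf (of_real t)"
    using assms by (intro ygf_sums) simp
  ultimately show ?thesis using sums_unique2 by blast
qed

lemma Yr_nonneg: "0 \<le> t \<Longrightarrow> t < rho \<Longrightarrow> 0 \<le> Yr t"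
  using Yr_sums[of t] by (auto simp: sums_iff Yr_def intro!: suminf_nonneg)

lemma Yr_ge: "0 \<le> t \<Longrightarrow> t < rho \<Longrightarrow> t \<le> Yr t"
proof -
  assume t: "0 \<le> t" "t < rho"
  have s: "summable (\<lambda>n. real (ycount n) * t^n)" using Yr_sums[OF t] by (simp add: sums_iff)
  have "(\<Sum>n<2. real (ycount n) * t^n) \<le> Yr t"
    unfolding Yr_def using t by (intro sum_le_suminf s) auto
  moreover have "ycount 1 \<ge> 1" by (rule ycount_pos) simp
  hence "1 * t \<le> real (ycount 1) * t" using t by (intro mult_right_mono) auto
  hence "t \<le> (\<Sum>n<2. real (ycount n) * t^n)"
    by (simp add: eval_nat_numeral ycount_0)
  ultimately show ?thesis by linarith
qed

lemma rho_le: "rho \<le> 1 / exp 1"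
proof (rule ccontr)
  assume "\<not> rho \<le> 1 / exp 1"
  define a where "a = 1 / exp (1::real)"
  have a0: "0 < a" by (simp add: a_def)
  have ar: "a < rho" using \<open>\<not> rho \<le> 1 / exp 1\<close> by (simp add: a_def)
  define t where "t = (rho + a) / 2"
  have t1: "0 < t" using a0 ar unfolding t_def by simp
  have t2: "t < rho" using a0 ar unfolding t_def by simp
  have t3: "a < t" using a0 ar unfolding t_def by simp
  note t = t1 t2 t3
  have t0: "0 \<le> t" using t by simp
  have ct: "cmod (of_real t) < rho" using t by simp
  have ti: "\<And>i. 0 \<le> t^Suc i" "\<And>i. t^Suc i < rho"
  proof -
    fix i
    show "0 \<le> t^Suc i" using t by simp
    have "t < 1" using t rho_props(3) by simp
    hence "t^i \<le> 1" using t0 by (simp add: power_le_one)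
    hence "t * t^i \<le> t * 1" using t0 by (intro mult_left_mono) auto
    thus "t^Suc i < rho" using t(2) by (simp only: power_Suc mult_1_right)
  qed
  define hr where "hr = (\<Sum>i. Yr (t^Suc i) / real (Suc i))"
  have eq: "(\<lambda>i. ygf ((of_real t)^Suc i) / of_nat (Suc i)) = (\<lambda>i. of_real (Yr (t^Suc i) / real (Suc i)))"
  proof (rule ext)
    fix i
    have "ygf ((of_real t)^Suc i) = of_real (Yr (t^Suc i))"
      using ygf_real[OF ti(1)[of i] ti(2)[of i]] by (simp only: of_real_power)
    thus "ygf ((of_real t)^Suc i) / of_nat (Suc i) = of_real (Yr (t^Suc i) / real (Suc i))"
      by (simp del: of_nat_Suc)
  qed
  have sm: "summable (\<lambda>i. Yr (t^Suc i) / real (Suc i))"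
  proof -
    have "summable (\<lambda>i. (of_real (Yr (t^Suc i) / real (Suc i)) :: complex))"
      using eval_Hf(2)[OF ct] unfolding eq .
    thus ?thesis by (simp only: summable_complex_of_real)
  qed
  have "(\<Sum>i. ygf ((of_real t)^Suc i) / of_nat (Suc i)) = of_real hr"
    unfolding eq hr_def by (rule suminf_of_real[OF sm, symmetric])
  hence "of_real (Yr t) = (of_real t * exp (of_real hr) :: complex)"
    using functional_eq[OF ct] ygf_real[OF t0 t(2)] by simp
  hence Yeq: "Yr t = t * exp hr" by (metis exp_of_real of_real_eq_iff of_real_mult)
  have "(\<Sum>i<1. Yr (t^Suc i) / real (Suc i)) \<le> hr"
    unfolding hr_def using ti by (intro sum_le_suminf sm) (auto intro!: divide_nonneg_nonneg Yr_nonneg)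
  hence "Yr t \<le> hr" by simp
  hence "exp (Yr t) \<le> exp hr" by simp
  hence "Yr t \<ge> t * exp (Yr t)" using Yeq t0 by (simp add: mult_left_mono)
  moreover have "t * exp (Yr t) \<ge> t * (exp 1 * Yr t)" using t0 exp_ge_e_times by (intro mult_left_mono) auto
  ultimately have "Yr t \<ge> (t * exp 1) * Yr t" by (simp add: mult.assoc)
  moreover have "Yr t > 0" using Yr_ge[OF t0 t(2)] t by simp
  ultimately have "t * exp 1 \<le> 1" by simp
  moreover have "1 < t * exp 1" using t(3) by (simp add: a_def field_simps)
  ultimately show False by simp
qed

lemma rho_sq: "rho^2 < 3/20"
proof -
  have rp: "0 \<le> rho" using rho_props(2) by simp
  have "rho \<le> 1 / exp 1" by (rule rho_le)
  also have "\<dots> \<le> 10/26" using e_lower by (simp add: field_simps)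
  finally have "rho^2 \<le> (10/26)^2" using rp by (intro power_mono) auto
  moreover have "(10/26::real)^2 = 100/676" by (simp add: power2_eq_square)
  ultimately show ?thesis by linarith
qed




lemma pow_sub_one: "cmod (u::complex) \<le> 1 \<Longrightarrow> cmod (u^n - 1) \<le> real n * cmod (u - 1)"
proof (induction n)
  case 0 thus ?case by simp
next
  case (Suc n)
  have "u^Suc n - 1 = u * (u^n - 1) + (u - 1)" by (simp add: algebra_simps)
  hence "cmod (u^Suc n - 1) \<le> cmod (u * (u^n - 1)) + cmod (u - 1)" by (metis norm_triangle_ineq)
  also have "cmod (u * (u^n - 1)) \<le> 1 * cmod (u^n - 1)"
    unfolding norm_mult using Suc.prems by (intro mult_right_mono) auto
  also have "\<dots> \<le> real n * cmod (u - 1)" using Suc by simp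
  finally show ?case by (simp add: algebra_simps)
qed

lemma Af_bound:
  assumes x: "cmod x \<le> 3/20"
  shows "cmod (eval_fps Af x) \<le> 123/100"
proof -
  let ?t = "cmod x"
  have p: "1 + ?t * (123/100)^2 \<le> 123/100"
  proof -
    have "?t * (123/100)^2 \<le> 3/20 * (123/100)^2" using x by (intro mult_right_mono) auto
    thus ?thesis by (simp add: power2_eq_square)
  qed
  have s: "summable (\<lambda>m. real (acnt m) * ?t^m)" and b: "(\<Sum>m. real (acnt m) * ?t^m) \<le> 123/100"
    using acnt_suminf_bound[OF _ p] by auto
  have nf: "(\<lambda>m. norm (fps_nth Af m * x^m)) = (\<lambda>m. real (acnt m) * ?t^m)"
    by (simp add: Af_def norm_mult norm_power)
  have "cmod (eval_fps Af x) = norm (\<Sum>m. fps_nth Af m * x^m)" by (simp add: eval_fps_def)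
  also have "\<dots> \<le> (\<Sum>m. norm (fps_nth Af m * x^m))"
    by (rule summable_norm) (simp add: nf s)
  also have "\<dots> \<le> 123/100" using b by (simp add: nf)
  finally show ?thesis .
qed

lemma small_lt_rho: "cmod (x::complex) \<le> 3/20 \<Longrightarrow> cmod x < rho"
  using rho_props(2) by simp

lemma ygf_bound:
  assumes x: "cmod x \<le> 3/20"
  shows "cmod (ygf x) \<le> 123/100 * cmod x"
proof -
  have "cmod (ygf x) = cmod x * cmod (eval_fps Af x)"
    using ygf_eq_Af[OF small_lt_rho[OF x]] by (simp add: norm_mult)
  also have "\<dots> \<le> cmod x * (123/100)" using Af_bound[OF x] by (intro mult_left_mono) auto
  finally show ?thesis by (simp add: mult.commute)
qed

lemma main_ind:
  "\<forall>x u. cmod x \<le> 3/20 \<longrightarrow> cmod u \<le> 1 \<longrightarrow>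
      cmod (wk k x u) \<le> 123/100 * cmod (u - 1) * cmod x * (1/2)^k"
proof (induction k)
  case 0
  show ?case
  proof (intro allI impI)
    fix x u :: complex assume x: "cmod x \<le> 3/20" and u: "cmod u \<le> 1"
    have "wk 0 x u = (u - 1) * ygf x" by (simp add: wk_def algebra_simps)
    hence "cmod (wk 0 x u) = cmod (u - 1) * cmod (ygf x)" by (simp add: norm_mult)
    also have "\<dots> \<le> cmod (u - 1) * (123/100 * cmod x)" using ygf_bound[OF x] by (intro mult_left_mono) auto
    finally show "cmod (wk 0 x u) \<le> 123/100 * cmod (u - 1) * cmod x * (1/2)^0" by simp
  qed
next
  case (Suc k)
  show ?case
  proof (intro allI impI)
    fix x u :: complex assume x: "cmod x \<le> 3/20" and u: "cmod u \<le> 1"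
    let ?r = "cmod x"
    define A0 where "A0 = 123/100 * cmod (u - 1) * (1/2::real)^k"
    have A0: "0 \<le> A0" by (simp add: A0_def)
    have r0: "0 \<le> ?r" by simp
    have r1: "?r < 1" using x by simp
    have xr: "cmod x < rho" by (rule small_lt_rho[OF x])
    define dd where "dd i = wk k (x^Suc i) (u^Suc i) / of_nat (Suc i)" for i
    define gg where "gg i = ygf (x^Suc i) / of_nat (Suc i)" for i
    have ddb: "cmod (dd i) \<le> A0 * ?r^Suc i" for i
    proof -
      have xi: "cmod (x^Suc i) \<le> 3/20"
      proof -
        have "?r^i \<le> 1" using r1 by (simp add: power_le_one)
        hence "?r * ?r^i \<le> ?r * 1" by (intro mult_left_mono) auto
        thus ?thesis using x by (simp add: norm_power norm_mult)
      qed
      have ui: "cmod (u^Suc i) \<le> 1" unfolding norm_power using u by (intro power_le_one) auto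
      have "cmod (wk k (x^Suc i) (u^Suc i)) \<le> 123/100 * cmod (u^Suc i - 1) * cmod (x^Suc i) * (1/2)^k"
        using Suc.IH xi ui by blast
      also have "\<dots> \<le> 123/100 * (real (Suc i) * cmod (u - 1)) * cmod (x^Suc i) * (1/2)^k"
        using pow_sub_one[OF u, of "Suc i"] by (intro mult_right_mono mult_left_mono) auto
      also have "\<dots> = real (Suc i) * (A0 * ?r^Suc i)" by (simp add: A0_def norm_power norm_mult algebra_simps)
      finally have "cmod (wk k (x^Suc i) (u^Suc i)) \<le> real (Suc i) * (A0 * ?r^Suc i)" .
      thus ?thesis by (simp add: dd_def norm_divide field_simps del: of_nat_Suc)
    qed
    have gsum: "summable (\<lambda>i. A0 * ?r^Suc i)"
      using r1 by (intro summable_mult summable_geometric_iff[THEN iffD2] summable_mult2) auto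
    have ds: "summable dd" by (rule summable_comparison_test'[OF gsum]) (use ddb in auto)
    have dnorm: "summable (\<lambda>i. norm (dd i))" by (rule summable_comparison_test'[OF gsum]) (use ddb in auto)
    have gs: "summable gg" unfolding gg_def by (rule eval_Hf(2)[OF xr])
    define D where "D = (\<Sum>i. dd i)"
    have "(\<lambda>i. yk k (x^Suc i) (u^Suc i) / of_nat (Suc i)) = (\<lambda>i. gg i + dd i)"
      by (auto simp: gg_def dd_def wk_def diff_divide_distrib)
    hence "(\<Sum>i. yk k (x^Suc i) (u^Suc i) / of_nat (Suc i)) = (\<Sum>i. gg i) + D"
      using suminf_add[OF gs ds] by (simp add: D_def)
    hence "yk (Suc k) x u = x * exp (\<Sum>i. gg i) * exp D" by (simp add: exp_add)
    also have "x * exp (\<Sum>i. gg i) = ygf x" using functional_eq[OF xr] by (simp add: gg_def)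
    finally have wk_eq: "wk (Suc k) x u = ygf x * (exp D - 1)" by (simp add: wk_def algebra_simps)
    have Db: "cmod D \<le> A0 * (?r / (1 - ?r))"
    proof -
      have "cmod D \<le> (\<Sum>i. norm (dd i))" unfolding D_def by (rule summable_norm[OF dnorm])
      also have "\<dots> \<le> (\<Sum>i. A0 * ?r^Suc i)" by (rule suminf_le[OF ddb dnorm gsum])
      also have "\<dots> = A0 * (?r * (\<Sum>i. ?r^i))"
      proof -
        have sg: "summable (\<lambda>i. ?r^i)" using r1 by (intro summable_geometric) simp
        have s2: "summable (\<lambda>i. ?r * ?r^i)" by (rule summable_mult[OF sg])
        have "(\<Sum>i. A0 * ?r^Suc i) = (\<Sum>i. A0 * (?r * ?r^i))" by simp
        also have "\<dots> = A0 * (\<Sum>i. ?r * ?r^i)" by (rule suminf_mult[OF s2])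
        also have "(\<Sum>i. ?r * ?r^i) = ?r * (\<Sum>i. ?r^i)" by (rule suminf_mult[OF sg])
        finally show ?thesis .
      qed
      also have "(\<Sum>i. ?r^i) = 1 / (1 - ?r)" using r1 by (simp add: suminf_geometric)
      finally show ?thesis by simp
    qed
    have rq: "?r / (1 - ?r) \<le> 3/17" using x r1 by (simp add: field_simps)
    have A0b: "A0 \<le> 123/100 * 2" 
    proof -
      have "cmod (u - 1) \<le> cmod u + 1" by (metis norm_one norm_triangle_ineq4)
      hence "cmod (u - 1) \<le> 2" using u by simp
      moreover have "(1/2::real)^k \<le> 1" by (simp add: power_le_one)
      ultimately have "cmod (u - 1) * (1/2::real)^k \<le> 2 * 1" by (intro mult_mono) auto
      thus ?thesis by (simp add: A0_def)
    qed
    have Dh: "cmod D \<le> 1/2"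
    proof -
      have "A0 * (?r / (1 - ?r)) \<le> (123/100 * 2) * (3/17)"
        using A0 A0b rq r0 r1 by (intro mult_mono) auto
      moreover have "(123/100 * 2) * (3/17) \<le> (1/2::real)" by simp
      ultimately show ?thesis using Db by linarith
    qed
    have "cmod (wk (Suc k) x u) = cmod (ygf x) * cmod (exp D - 1)" by (simp add: wk_eq norm_mult)
    also have "\<dots> \<le> (123/100 * ?r) * (3/2 * cmod D)"
      using ygf_bound[OF x] norm_exp_bounds(2)[OF Dh] by (intro mult_mono) auto
    also have "\<dots> \<le> (123/100 * ?r) * (3/2 * (A0 * (3/17)))"
    proof -
      have "cmod D \<le> A0 * (3/17)" using Db rq A0 by (meson mult_left_mono order_trans)
      thus ?thesis by (intro mult_left_mono) auto
    qed
    also have "\<dots> \<le> A0 * ?r * (1/2)" using A0 r0 by (simp add: algebra_simps mult_left_mono)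
    also have "\<dots> = 123/100 * cmod (u - 1) * cmod x * (1/2)^Suc k" by (simp add: A0_def)
    finally show "cmod (wk (Suc k) x u) \<le> 123/100 * cmod (u - 1) * cmod x * (1/2)^Suc k" .
  qed
qed

theorem mainTheorem9:
  shows "\<exists>\<epsilon>>0. \<exists>L C. 0 < L \<and> L < 1 \<and> C > (0::real) \<and>
    (\<forall>(x::complex) (u::complex) (k::nat). cmod x \<le> rho ^ 2 + \<epsilon> \<longrightarrow> cmod u \<le> 1 \<longrightarrow>
       cmod (wk k x u) \<le> C * cmod (u - 1) * cmod x * L ^ k)"
proof (intro exI conjI allI impI)
  show "0 < 3/20 - rho^2" using rho_sq by simp
  show "0 < (1/2::real)" "(1/2::real) < 1" "(0::real) < 123/100" by auto
  fix x u :: complex and k :: nat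
  assume "cmod x \<le> rho^2 + (3/20 - rho^2)" "cmod u \<le> 1"
  thus "cmod (wk k x u) \<le> 123/100 * cmod (u - 1) * cmod x * (1/2)^k"
    using main_ind[of k] by simp
qed


end
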